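(* Let $N\ge d$ and let $K\subset\mathbb{R}^d$ be a compact convex polytope of dimension $d$ with codimension-one faces $F_0,\dots,F_N$. Suppose every collection of $d$ normal vectors of the hyperplanes containing these faces is linearly independent. Let $S\supseteq K$ be a $d$-dimensional simplex each of whose codimension-one faces contains a face of $K$. Then for every nonzero vector $b\in\mathbb{R}^d$, the translate $b+K$ contains points not in $S$.
   Context: The simplices $S$ considered are those appearing in a representation $K=\bigcap_j S_j$ of $K$ as an intersection of $d$-dimensional simplices each of whose faces contains a face of $K$. *)

theory Defs
  imports "HOL-Analysis.Analysis"
begin

end

theory Submission
  imports Defs
begin

theorem lemma3p9:
  fixes K S :: "'a::euclidean_space set" and N :: nat
  assumes "N \<ge> DIM('a)"
    and "polytope K" and "aff_dim K = int DIM('a)"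
    and "card {F. F facet_of K} = N + 1"
    and "\<And>Fs nrm. Fs \<subseteq> {F. F facet_of K} \<Longrightarrow> card Fs = DIM('a) \<Longrightarrow>
           (\<forall>F\<in>Fs. nrm F \<noteq> 0 \<and> (\<exists>c. F \<subseteq> {x. nrm F \<bullet> x = c})) \<Longrightarrow>
           independent (nrm ` Fs) \<and> card (nrm ` Fs) = DIM('a)"
    and "int DIM('a) simplex S" and "K \<subseteq> S"
    and "\<forall>G. G facet_of S \<longrightarrow> (\<exists>F. F facet_of K \<and> F \<subseteq> G)"
    and "b \<noteq> 0"
  shows "\<not> ((\<lambda>x. b + x) ` K \<subseteq> S)"
proof
  assume tr: "(\<lambda>x. b + x) ` K \<subseteq> S"
  have polyS: "polyhedron S" using assms(6) simplex_imp_polyhedron by blast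
  have affS: "aff_dim S = int DIM('a)" using assms(6) aff_dim_simplex by blast
  have ahS: "affine hull S = UNIV" using affS aff_dim_eq_full by blast
  obtain F where "finite F" and seq: "S = affine hull S \<inter> \<Inter>F"
             and faces: "\<And>h. h \<in> F \<Longrightarrow> \<exists>a c. a \<noteq> 0 \<and> h = {x. a \<bullet> x \<le> c}"
             and min: "\<And>F'. F' \<subset> F \<Longrightarrow> S \<subset> (affine hull S) \<inter> \<Inter>F'"
    using polyS by (simp add: polyhedron_Int_affine_minimal) meson
  then obtain a c where ac: "\<And>h. h \<in> F \<Longrightarrow> a h \<noteq> 0 \<and> h = {x. a h \<bullet> x \<le> c h}"
    by metis
  have neg: "a h \<bullet> b \<le> 0" if "h \<in> F" for h
  proof -
    have "S \<inter> {x. a h \<bullet> x = c h} facet_of S"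
      using facet_of_polyhedron_explicit [OF \<open>finite F\<close> seq ac min] that by blast
    then obtain F' where F': "F' facet_of K" "F' \<subseteq> S \<inter> {x. a h \<bullet> x = c h}"
      using assms(8) by blast
    have "F' \<noteq> {}"
    proof
      assume "F' = {}"
      then have "aff_dim K = 0" using F'(1) unfolding facet_of_def by simp
      then show False using assms(3) by simp
    qed
    then obtain f where f: "f \<in> F'" by blast
    have "f \<in> K" using F'(1) f facet_of_imp_subset by blast
    then have "b + f \<in> S" using tr by blast
    then have "b + f \<in> h" using seq that by blast
    then have "a h \<bullet> (b + f) \<le> c h" using ac[OF that] by blast
    moreover have "a h \<bullet> f = c h" using F'(2) f by blast
    ultimately show ?thesis by (simp add: inner_add_right)
  qed
  have Sne: "S \<noteq> {}" using affS by auto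
  then obtain s where s: "s \<in> S" by blast
  have ray: "s + t *\<^sub>R b \<in> S" if "t \<ge> 0" for t
  proof -
    have "s + t *\<^sub>R b \<in> h" if "h \<in> F" for h
    proof -
      have "s \<in> h" using s seq that by blast
      then have "a h \<bullet> s \<le> c h" using ac[OF that] by blast
      moreover have "t * (a h \<bullet> b) \<le> 0" using neg[OF that] \<open>t \<ge> 0\<close>
        by (simp add: mult_nonneg_nonpos)
      ultimately have "a h \<bullet> (s + t *\<^sub>R b) \<le> c h" by (simp add: inner_add_right)
      then show ?thesis using ac[OF that] by blast
    qed
    then show ?thesis using seq ahS by blast
  qed
  have "bounded S" using assms(6) compact_simplex compact_imp_bounded by blast
  then obtain B where B: "\<And>x. x \<in> S \<Longrightarrow> norm x \<le> B" by (meson bounded_iff)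
  define t where "t = (B + norm s + 1) / norm b"
  have nb: "norm b > 0" using assms(9) by simp
  have "B \<ge> 0" using B[OF s] norm_ge_zero[of s] by linarith
  then have t0: "t \<ge> 0" using nb unfolding t_def by simp
  have "norm (t *\<^sub>R b) = B + norm s + 1" using nb t0 \<open>B \<ge> 0\<close> unfolding t_def by simp
  moreover have "norm (t *\<^sub>R b) \<le> norm (s + t *\<^sub>R b) + norm s"
    using norm_triangle_ineq4[of "s + t *\<^sub>R b" s] by (simp add: norm_minus_commute)
  moreover have "norm (s + t *\<^sub>R b) \<le> B" using B ray t0 by blast
  ultimately show False by linarith
qed

end
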